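(* Consider a network given by a finite directed graph whose vertex set consists of one or more gateway nodes together with $N\ge 1$ non-gateway nodes indexed by $\Gamma=\{1,\dots,N\}$, and whose directed edges (links) are indexed by $\Lambda=\{1,\dots,L\}$. For each non-gateway node $i\in\Gamma$ let $I_i\subseteq\Lambda$ be the set of links entering $i$ and $O_i\subseteq\Lambda$ the set of links leaving $i$. Let $S_l>0$ ($l\in\Lambda$), $n>0$ and $I_{k\to l}\ge 0$ ($k,l\in\Lambda$, $k\neq l$) be given, and for every nonempty $A\subseteq\Lambda$ and $l\in A$ define $$\gamma_{l,A}=\log\Big(1+\frac{S_l}{n+\sum_{k\in A\setminus\{l\}} I_{k\to l}}\Big).$$ Let $\alpha_i>0$ ($i\in\Gamma$) be given weights. Consider the linear program, over variables $x_A$ (one for each nonempty $A\subseteq\Lambda$), $r_l$ ($l\in\Lambda$), $d_i$ ($i\in\Gamma$) and $d$: maximize $d$ subject to $\sum_{A} x_A=1$; $r_l=\sum_{A\ni l} x_A\gamma_{l,A}$ for all $l\in\Lambda$; $\sum_{l\in I_i} r_l-\sum_{k\in O_i} r_k=d_i$ for all $i\in\Gamma$; $d_i\ge \alpha_i d$ for all $i\in\Gamma$; $x_A\ge 0$ for all nonempty $A\subseteq\Lambda$. Then this linear program has an optimal solution in which at most $N$ of the variables $x_A$ are nonzero. *)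

theory Defs
  imports Complex_Main
begin

definition link_sets :: "nat \<Rightarrow> nat set set" where
  "link_sets L = {A. A \<subseteq> {1..L} \<and> A \<noteq> {}}"

definition gamma :: "(nat \<Rightarrow> real) \<Rightarrow> real \<Rightarrow> (nat \<Rightarrow> nat \<Rightarrow> real) \<Rightarrow> nat \<Rightarrow> nat set \<Rightarrow> real" where
  "gamma S n Intf l A = ln (1 + S l / (n + (\<Sum>k\<in>A - {l}. Intf k l)))"

text \<open>Feasibility for the linear program. \<open>Inc i\<close> / \<open>Out i\<close> are the links entering / leaving node i;
  \<open>x\<close> is indexed by link sets, \<open>r\<close> by links, \<open>dd\<close> by non-gateway nodes.\<close>
definition lp_feasible ::
  "nat \<Rightarrow> nat \<Rightarrow> (nat \<Rightarrow> nat set) \<Rightarrow> (nat \<Rightarrow> nat set) \<Rightarrow> (nat \<Rightarrow> real) \<Rightarrow> real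
   \<Rightarrow> (nat \<Rightarrow> nat \<Rightarrow> real) \<Rightarrow> (nat \<Rightarrow> real)
   \<Rightarrow> (nat set \<Rightarrow> real) \<Rightarrow> (nat \<Rightarrow> real) \<Rightarrow> (nat \<Rightarrow> real) \<Rightarrow> real \<Rightarrow> bool" where
  "lp_feasible L N Inc Out S n Intf alpha x r dd d \<longleftrightarrow>
     (\<Sum>A\<in>link_sets L. x A) = 1 \<and>
     (\<forall>l\<in>{1..L}. r l = (\<Sum>A\<in>{A\<in>link_sets L. l \<in> A}. x A * gamma S n Intf l A)) \<and>
     (\<forall>i\<in>{1..N}. (\<Sum>l\<in>Inc i. r l) - (\<Sum>k\<in>Out i. r k) = dd i) \<and>
     (\<forall>i\<in>{1..N}. dd i \<ge> alpha i * d) \<and>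
     (\<forall>A\<in>link_sets L. x A \<ge> 0)"

definition lp_optimal ::
  "nat \<Rightarrow> nat \<Rightarrow> (nat \<Rightarrow> nat set) \<Rightarrow> (nat \<Rightarrow> nat set) \<Rightarrow> (nat \<Rightarrow> real) \<Rightarrow> real
   \<Rightarrow> (nat \<Rightarrow> nat \<Rightarrow> real) \<Rightarrow> (nat \<Rightarrow> real)
   \<Rightarrow> (nat set \<Rightarrow> real) \<Rightarrow> (nat \<Rightarrow> real) \<Rightarrow> (nat \<Rightarrow> real) \<Rightarrow> real \<Rightarrow> bool" where
  "lp_optimal L N Inc Out S n Intf alpha x r dd d \<longleftrightarrow>
     lp_feasible L N Inc Out S n Intf alpha x r dd d \<and>
     (\<forall>x' r' dd' d'. lp_feasible L N Inc Out S n Intf alpha x' r' dd' d' \<longrightarrow> d' \<le> d)"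

end

theory Submission
  imports Defs begin

lemma kernel_exists:
  fixes f :: "'e \<Rightarrow> 'v \<Rightarrow> real"
  assumes "finite E" "finite V" "card E < card V"
  shows "\<exists>y. (\<exists>v\<in>V. y v \<noteq> 0) \<and> (\<forall>e\<in>E. (\<Sum>v\<in>V. f e v * y v) = 0)"
  using assms
proof (induction E arbitrary: V f rule: finite_induct)
  case empty
  then obtain v0 where "v0 \<in> V" by (metis card_gt_0_iff equals0I card.empty)
  then show ?case by (intro exI[of _ "\<lambda>v. 1"]) auto
next
  case (insert e E)
  show ?case
  proof (cases "\<forall>v\<in>V. f e v = 0")
    case True
    have "card E < card V" using insert by simp
    from insert.IH[OF insert.prems(1) this, of f] obtain y where
      "\<exists>v\<in>V. y v \<noteq> 0" "\<forall>e\<in>E. (\<Sum>v\<in>V. f e v * y v) = 0" by blast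
    then show ?thesis using True by (intro exI[of _ y]) auto
  next
    case False
    then obtain v0 where v0: "v0 \<in> V" "f e v0 \<noteq> 0" by auto
    define V' where "V' = V - {v0}"
    define f' where "f' = (\<lambda>e' v. f e' v - f e' v0 * f e v / f e v0)"
    have "finite V'" "card E < card V'" using insert v0 by (auto simp: V'_def)
    from insert.IH[OF this, of f'] obtain y' where y': "\<exists>v\<in>V'. y' v \<noteq> 0"
      "\<forall>e'\<in>E. (\<Sum>v\<in>V'. f' e' v * y' v) = 0" by blast
    define y where "y = (\<lambda>v. if v = v0 then - (\<Sum>w\<in>V'. f e w * y' w) / f e v0 else y' v)"
    have split: "\<And>g. (\<Sum>v\<in>V. g v) = g v0 + (\<Sum>v\<in>V'. g v)"
      using v0 insert.prems(1) by (simp add: V'_def sum.remove)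
    have yV': "\<And>g. (\<Sum>v\<in>V'. g v * y v) = (\<Sum>v\<in>V'. g v * y' v)"
      by (rule sum.cong) (auto simp: y_def V'_def)
    have y0: "y v0 = - (\<Sum>w\<in>V'. f e w * y' w) / f e v0" by (simp add: y_def)
    show ?thesis
    proof (intro exI[of _ y] conjI ballI)
      show "\<exists>v\<in>V. y v \<noteq> 0" using y'(1) by (auto simp: y_def V'_def)
      fix e' assume "e' \<in> insert e E"
      then show "(\<Sum>v\<in>V. f e' v * y v) = 0"
      proof
        assume "e' = e" then show ?thesis using v0 by (simp add: split yV' y0)
      next
        assume "e' \<in> E"
        then have h: "(\<Sum>v\<in>V'. f' e' v * y' v) = 0" using y' by blast
        have "(\<Sum>v\<in>V'. f' e' v * y' v) = (\<Sum>v\<in>V'. f e' v * y' v) - f e' v0 / f e v0 * (\<Sum>v\<in>V'. f e v * y' v)"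
          by (simp add: f'_def sum_subtractf sum_distrib_left algebra_simps)
        then have h2: "(\<Sum>v\<in>V'. f e' v * y' v) - f e' v0 / f e v0 * (\<Sum>v\<in>V'. f e v * y' v) = 0" using h by simp
        have "(\<Sum>v\<in>V. f e' v * y v) = f e' v0 * y v0 + (\<Sum>v\<in>V'. f e' v * y' v)"
          by (simp add: split yV')
        also have "\<dots> = (\<Sum>v\<in>V'. f e' v * y' v) - f e' v0 / f e v0 * (\<Sum>v\<in>V'. f e v * y' v)"
          by (simp add: y0)
        finally show ?thesis using h2 by simp
      qed
    qed
  qed
qed


locale glp =
  fixes M :: "'a set" and I :: "nat set" and c :: "nat \<Rightarrow> 'a \<Rightarrow> real" and alpha :: "nat \<Rightarrow> real"
  assumes finM: "finite M" and neM: "M \<noteq> {}" and finI: "finite I" and neI: "I \<noteq> {}"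
    and apos: "\<And>i. i \<in> I \<Longrightarrow> alpha i > 0"
begin

definition val where "val i x = (\<Sum>A\<in>M. x A * c i A)"
definition feas where "feas x d \<longleftrightarrow> (\<forall>A\<in>M. 0 \<le> x A) \<and> sum x M = 1 \<and> (\<forall>i\<in>I. alpha i * d \<le> val i x)"
definition supp where "supp x = {A\<in>M. x A \<noteq> 0}"
definition tight where "tight x d = {i\<in>I. val i x = alpha i * d}"
definition dirn where "dirn x d y t \<longleftrightarrow> (\<forall>A\<in>M - supp x. y A = 0) \<and> sum y M = 0 \<and> (\<forall>i\<in>tight x d. val i y = alpha i * t)"
definition vertex where "vertex x d \<longleftrightarrow> feas x d \<and> (\<forall>y t. dirn x d y t \<longrightarrow> (\<forall>A\<in>M. y A = 0) \<and> t = 0)"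

lemma val_lin: "val i (\<lambda>A. x A + s * y A) = val i x + s * val i y"
  by (simp add: val_def sum.distrib sum_distrib_left algebra_simps)

lemma val_neg: "val i (\<lambda>A. - y A) = - val i y"
  by (simp add: val_def sum_negf)

lemma val_diff: "val i (\<lambda>A. x A - y A) = val i x - val i y"
  by (simp add: val_def sum_subtractf algebra_simps)

lemma dirn_neg: "dirn x d y t \<Longrightarrow> dirn x d (\<lambda>A. - y A) (- t)"
  by (auto simp: dirn_def val_neg sum_negf)

lemma reduce: "feas x d \<Longrightarrow> \<exists>x' d'. vertex x' d' \<and> d \<le> d'"
proof (induction "card (supp x) + card (I - tight x d)" arbitrary: x d rule: less_induct)
  case less
  show ?case
  proof (cases "vertex x d")
    case True then show ?thesis by auto
  next
    case False
    then obtain y0 t0 where dir0: "dirn x d y0 t0" and nz0: "(\<exists>A\<in>M. y0 A \<noteq> 0) \<or> t0 \<noteq> 0"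
      using less.prems by (auto simp: vertex_def)
    obtain y t where dir: "dirn x d y t" and tpos: "t \<ge> 0" and yneg: "t = 0 \<Longrightarrow> \<exists>A\<in>M. y A < 0"
    proof -
      consider "t0 > 0" | "t0 < 0" | "t0 = 0" "\<exists>A\<in>M. y0 A < 0" | "t0 = 0" "\<exists>A\<in>M. y0 A > 0"
        using nz0 by (metis linorder_neqE_linordered_idom)
      then show ?thesis
      proof cases
        case 1 then show ?thesis using that[OF dir0] by auto
      next
        case 2 then show ?thesis using that[OF dirn_neg[OF dir0]] by auto
      next
        case 3 then show ?thesis using that[OF dir0] by auto
      next
        case 4 then show ?thesis using that[OF dirn_neg[OF dir0]] by auto
      qed
    qed
    have fx: "\<forall>A\<in>M. 0 \<le> x A" "sum x M = 1" "\<forall>i\<in>I. alpha i * d \<le> val i x"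
      using less.prems by (auto simp: feas_def)
    define rate where "rate i = val i y - alpha i * t" for i
    define slack where "slack i = val i x - alpha i * d" for i
    define B1 where "B1 = {A\<in>M. y A < 0}"
    define B2 where "B2 = {i\<in>I - tight x d. rate i < 0}"
    define R where "R = (\<lambda>A. x A / (- y A)) ` B1 \<union> (\<lambda>i. slack i / (- rate i)) ` B2"
    have finR: "finite R" using finM finI by (auto simp: R_def B1_def B2_def)
    have ysupp: "\<And>A. A \<in> M \<Longrightarrow> y A \<noteq> 0 \<Longrightarrow> x A > 0"
      using dir fx(1) by (force simp: dirn_def supp_def)
    have slackpos: "\<And>i. i \<in> I - tight x d \<Longrightarrow> slack i > 0"
      using fx(3) by (force simp: slack_def tight_def)
    have rate0: "\<And>i. i \<in> tight x d \<Longrightarrow> rate i = 0"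
      using dir by (auto simp: dirn_def rate_def)
    have neR: "R \<noteq> {}"
    proof (cases "B1 = {}")
      case False then show ?thesis by (auto simp: R_def)
    next
      case True
      then have tp: "t > 0" using yneg tpos by (force simp: B1_def)
      have ynn: "\<forall>A\<in>M. y A \<ge> 0" using True by (force simp: B1_def)
      have "sum y M = 0" using dir by (simp add: dirn_def)
      then have y0: "\<forall>A\<in>M. y A = 0" using ynn finM by (simp add: sum_nonneg_eq_0_iff)
      then have vy: "\<And>i. val i y = 0" by (simp add: val_def)
      show ?thesis
      proof (cases "I - tight x d = {}")
        case True
        obtain i where "i \<in> I" using neI by auto
        then have "i \<in> tight x d" using True by auto
        then have "alpha i * t = 0" using dir vy by (auto simp: dirn_def)
        then show ?thesis using apos[OF \<open>i \<in> I\<close>] tp by simp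
      next
        case False
        then obtain i where i: "i \<in> I - tight x d" by auto
        then have "rate i < 0" using apos tp vy by (simp add: rate_def)
        then have "i \<in> B2" using i by (simp add: B2_def)
        then show ?thesis by (auto simp: R_def)
      qed
    qed
    define s where "s = Min R"
    have sR: "s \<in> R" using finR neR by (simp add: s_def)
    have sle: "\<And>r. r \<in> R \<Longrightarrow> s \<le> r" using finR by (simp add: s_def)
    have spos: "s > 0"
      using sR ysupp slackpos by (auto simp: R_def B1_def B2_def intro!: divide_pos_neg)
    define x' where "x' = (\<lambda>A. x A + s * y A)"
    define d' where "d' = d + s * t"
    have feas': "feas x' d'"
      unfolding feas_def
    proof (intro conjI ballI)
      fix A assume A: "A \<in> M"
      show "0 \<le> x' A"
      proof (cases "y A < 0")
        case True
        then have "A \<in> B1" using A by (simp add: B1_def)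
        then have "s \<le> x A / (- y A)" using sle by (auto simp: R_def)
        then have "s * (- y A) \<le> x A" using True pos_le_divide_eq[of "- _" s] by (metis neg_0_less_iff_less)
        then show ?thesis by (simp add: x'_def)
      next
        case False
        then show ?thesis using fx(1) A spos by (simp add: x'_def)
      qed
    next
      show "sum x' M = 1" using fx(2) dir by (simp add: x'_def sum.distrib sum_distrib_left[symmetric] dirn_def)
    next
      fix i assume i: "i \<in> I"
      have eq: "val i x' - alpha i * d' = slack i + s * rate i"
        by (simp add: x'_def d'_def val_lin slack_def rate_def algebra_simps)
      have "slack i + s * rate i \<ge> 0"
      proof (cases "i \<in> tight x d")
        case True then show ?thesis using rate0 by (simp add: slack_def tight_def)
      next
        case nt: False
        show ?thesis
        proof (cases "rate i < 0")
          case True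
          then have "i \<in> B2" using i nt by (simp add: B2_def)
          then have "s \<le> slack i / (- rate i)" using sle by (auto simp: R_def)
          then have "s * (- rate i) \<le> slack i" using True pos_le_divide_eq[of "- _" s] by (metis neg_0_less_iff_less)
          then show ?thesis by simp
        next
          case False
          then show ?thesis using slackpos[of i] i nt spos by simp
        qed
      qed
      then show "alpha i * d' \<le> val i x'" using eq by simp
    qed
    have suppsub: "supp x' \<subseteq> supp x"
      using dir by (auto simp: supp_def x'_def dirn_def)
    have tightsub: "tight x d \<subseteq> tight x' d'"
      using dir by (auto simp: tight_def x'_def d'_def val_lin dirn_def algebra_simps)
    have finsupp: "finite (supp x)" using finM by (simp add: supp_def)
    have lt: "card (supp x') + card (I - tight x' d') < card (supp x) + card (I - tight x d)"
    proof -
      have c1: "card (supp x') \<le> card (supp x)" using suppsub finsupp by (simp add: card_mono)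
      have c2: "card (I - tight x' d') \<le> card (I - tight x d)"
        using tightsub finI by (intro card_mono) auto
      from sR consider A where "A \<in> B1" "s = x A / (- y A)" | i where "i \<in> B2" "s = slack i / (- rate i)"
        by (auto simp: R_def)
      then show ?thesis
      proof cases
        case (1 A)
        then have "x' A = 0" by (simp add: x'_def B1_def)
        moreover have "A \<in> supp x" using 1 ysupp by (force simp: B1_def supp_def)
        ultimately have "supp x' \<subset> supp x" using suppsub by (auto simp: supp_def)
        then have "card (supp x') < card (supp x)" using finsupp by (simp add: psubset_card_mono)
        then show ?thesis using c2 by simp
      next
        case (2 i)
        have eq: "val i x' - alpha i * d' = slack i + s * rate i"
          by (simp add: x'_def d'_def val_lin slack_def rate_def algebra_simps)
        then have "val i x' - alpha i * d' = 0" using 2 by (simp add: B2_def)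
        then have "i \<in> tight x' d'" using 2 by (simp add: B2_def tight_def)
        then have "I - tight x' d' \<subset> I - tight x d" using 2 tightsub by (auto simp: B2_def)
        then have "card (I - tight x' d') < card (I - tight x d)" using finI by (simp add: psubset_card_mono)
        then show ?thesis using c1 by simp
      qed
    qed
    from less.hyps[OF lt feas'] obtain x'' d'' where "vertex x'' d''" "d' \<le> d''" by blast
    moreover have "d \<le> d'" using spos tpos by (simp add: d'_def)
    ultimately show ?thesis by (meson order.trans)
  qed
qed


lemma vertex_unique:
  assumes v1: "vertex x1 d1" and v2: "vertex x2 d2" and s: "supp x1 = supp x2" and t: "tight x1 d1 = tight x2 d2"
  shows "d1 = d2"
proof -
  have f1: "feas x1 d1" and f2: "feas x2 d2" using v1 v2 by (auto simp: vertex_def)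
  have "dirn x1 d1 (\<lambda>A. x1 A - x2 A) (d1 - d2)"
    unfolding dirn_def
  proof (intro conjI ballI)
    fix A assume "A \<in> M - supp x1"
    then show "x1 A - x2 A = 0" using s by (auto simp: supp_def)
  next
    show "(\<Sum>A\<in>M. x1 A - x2 A) = 0" using f1 f2 by (simp add: sum_subtractf feas_def)
  next
    fix i assume i: "i \<in> tight x1 d1"
    then have "i \<in> tight x2 d2" using t by simp
    then show "val i (\<lambda>A. x1 A - x2 A) = alpha i * (d1 - d2)"
      using i by (simp add: val_diff tight_def algebra_simps)
  qed
  then have "d1 - d2 = 0" using v1 unfolding vertex_def by blast
  then show ?thesis by simp
qed

lemma finite_vertices: "finite {d. \<exists>x. vertex x d}"
proof -
  define xo where "xo d = (SOME x. vertex x d)" for d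
  define f where "f d = (supp (xo d), tight (xo d) d)" for d
  have xo: "vertex (xo d) d" if "d \<in> {d. \<exists>x. vertex x d}" for d
    using that someI_ex[of "\<lambda>x. vertex x d"] unfolding xo_def by auto
  have "inj_on f {d. \<exists>x. vertex x d}"
  proof (rule inj_onI)
    fix a b assume "a \<in> {d. \<exists>x. vertex x d}" "b \<in> {d. \<exists>x. vertex x d}" "f a = f b"
    then show "a = b" using vertex_unique[OF xo xo] by (simp add: f_def)
  qed
  moreover have "f ` {d. \<exists>x. vertex x d} \<subseteq> Pow M \<times> Pow I"
    by (auto simp: f_def supp_def tight_def)
  moreover have "finite (Pow M \<times> Pow I)" using finM finI by simp
  ultimately show ?thesis by (rule inj_on_finite)
qed

lemma feas_ex: "\<exists>x d. feas x d"
proof -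
  obtain A0 where A0: "A0 \<in> M" using neM by auto
  define x where "x A = (if A = A0 then 1::real else 0)" for A :: 'a
  define d where "d = Min ((\<lambda>i. c i A0 / alpha i) ` I)"
  have vx: "val i x = c i A0" for i
  proof -
    have "\<And>A. x A * c i A = (if A = A0 then c i A else 0)" by (simp add: x_def)
    then show ?thesis using A0 finM by (simp add: val_def)
  qed
  have "feas x d"
    unfolding feas_def
  proof (intro conjI ballI)
    show "sum x M = 1" using A0 finM by (simp add: x_def sum.delta)
  next
    fix i assume i: "i \<in> I"
    have "d \<le> c i A0 / alpha i" using i finI by (simp add: d_def)
    then show "alpha i * d \<le> val i x" using apos[OF i] by (simp add: vx pos_le_divide_eq mult.commute)
  qed (simp add: x_def)
  then show ?thesis by blast
qed

lemma opt_vertex: "\<exists>x d. vertex x d \<and> (\<forall>x' d'. feas x' d' \<longrightarrow> d' \<le> d)"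
proof -
  define V where "V = {d. \<exists>x. vertex x d}"
  have finV: "finite V" using finite_vertices by (simp add: V_def)
  obtain x0 d0 where "feas x0 d0" using feas_ex by blast
  then obtain x1 d1 where "vertex x1 d1" using reduce by blast
  then have neV: "V \<noteq> {}" by (auto simp: V_def)
  have "Max V \<in> V" using finV neV by simp
  then obtain x where x: "vertex x (Max V)" by (auto simp: V_def)
  have "d' \<le> Max V" if f: "feas x' d'" for x' d'
  proof -
    obtain x'' d'' where "vertex x'' d''" "d' \<le> d''" using reduce[OF f] by blast
    moreover then have "d'' \<in> V" by (auto simp: V_def)
    then have "d'' \<le> Max V" using Max_ge[OF finV] by blast
    ultimately show ?thesis by simp
  qed
  then show ?thesis using x by blast
qed

lemma sum_opt: "finite T \<Longrightarrow> (\<Sum>v\<in>insert None (Some ` T). g v) = g None + (\<Sum>A\<in>T. g (Some A))"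
  by (simp add: sum.reindex)

lemma vertex_card: assumes v: "vertex x d" shows "card (supp x) \<le> card I"
proof (rule ccontr)
  assume "\<not> ?thesis"
  then have lt: "card I < card (supp x)" by simp
  define T where "T = supp x"
  define J where "J = tight x d"
  have TM: "T \<subseteq> M" by (auto simp: T_def supp_def)
  have finT: "finite T" using TM finM finite_subset by blast
  have JI: "J \<subseteq> I" by (auto simp: J_def tight_def)
  have finJ: "finite J" using JI finI finite_subset by blast
  define fe where "fe e v = (case e of None \<Rightarrow> (case v of None \<Rightarrow> 0 | Some A \<Rightarrow> 1)
      | Some i \<Rightarrow> (case v of None \<Rightarrow> - alpha i | Some A \<Rightarrow> c i A))" for e :: "nat option" and v :: "'a option"
  have cV: "card (insert None (Some ` T)) = card T + 1" using finT by (simp add: card_image)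
  have cE: "card (insert None (Some ` J)) = card J + 1" using finJ by (simp add: card_image)
  have "card J \<le> card I" using JI finI by (simp add: card_mono)
  then have "card (insert None (Some ` J)) < card (insert None (Some ` T))"
    using cV cE lt by (simp add: T_def)
  from kernel_exists[OF _ _ this, of fe] finT finJ obtain yy where
    yy: "\<exists>v\<in>insert None (Some ` T). yy v \<noteq> 0"
      "\<forall>e\<in>insert None (Some ` J). (\<Sum>v\<in>insert None (Some ` T). fe e v * yy v) = 0" by auto
  define y where "y A = (if A \<in> T then yy (Some A) else 0)" for A
  have sumT: "(\<Sum>A\<in>M. y A * k A) = (\<Sum>A\<in>T. yy (Some A) * k A)" for k
  proof -
    have "(\<Sum>A\<in>M. y A * k A) = (\<Sum>A\<in>T. y A * k A)"
      using TM finM by (intro sum.mono_neutral_right) (auto simp: y_def)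
    also have "\<dots> = (\<Sum>A\<in>T. yy (Some A) * k A)" by (rule sum.cong) (auto simp: y_def)
    finally show ?thesis .
  qed
  have "dirn x d y (yy None)"
    unfolding dirn_def
  proof (intro conjI ballI)
    fix A assume "A \<in> M - supp x" then show "y A = 0" by (simp add: y_def T_def)
  next
    have "sum y M = (\<Sum>A\<in>M. y A * 1)" by simp
    also have "\<dots> = (\<Sum>A\<in>T. yy (Some A))" by (simp only: sumT) simp
    also have "\<dots> = 0"
    proof -
      have e0: "(\<Sum>v\<in>insert None (Some ` T). fe None v * yy v) = 0" using yy(2) by blast
      from e0[unfolded sum_opt[OF finT]] show ?thesis by (simp add: fe_def)
    qed
    finally show "sum y M = 0" .
  next
    fix i assume i: "i \<in> tight x d"
    have "val i y = (\<Sum>A\<in>T. yy (Some A) * c i A)" by (simp add: val_def sumT)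
    also have "\<dots> = alpha i * yy None"
    proof -
      have "i \<in> J" using i by (simp add: J_def)
      then have e0: "(\<Sum>v\<in>insert None (Some ` T). fe (Some i) v * yy v) = 0" using yy(2) by blast
      from e0[unfolded sum_opt[OF finT]] show ?thesis by (simp add: fe_def algebra_simps)
    qed
    finally show "val i y = alpha i * yy None" .
  qed
  then have h: "\<forall>A\<in>M. y A = 0" "yy None = 0" using v by (auto simp: vertex_def)
  from yy(1) obtain v where v: "v \<in> insert None (Some ` T)" "yy v \<noteq> 0" by blast
  then consider "v = None" | A where "A \<in> T" "v = Some A" by auto
  then show False
  proof cases
    case 1 then show False using h v by simp
  next
    case (2 A)
    then have "y A = yy (Some A)" by (simp add: y_def)
    moreover have "A \<in> M" using 2 TM by auto
    ultimately show False using h v 2 by auto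
  qed
qed

end


lemma swap_lemma:
  fixes h :: "nat \<Rightarrow> nat set \<Rightarrow> real"
  assumes "finite P" "finite LS"
  shows "(\<Sum>l\<in>P. \<Sum>A\<in>{A\<in>LS. l \<in> A}. h l A) = (\<Sum>A\<in>LS. \<Sum>l\<in>P \<inter> A. h l A)"
proof -
  have "(\<Sum>l\<in>P. \<Sum>A\<in>{A\<in>LS. l \<in> A}. h l A) = (\<Sum>l\<in>P. \<Sum>A\<in>LS. if l \<in> A then h l A else 0)"
    using assms by (simp add: sum.inter_filter)
  also have "\<dots> = (\<Sum>A\<in>LS. \<Sum>l\<in>P. if l \<in> A then h l A else 0)" by (rule sum.swap)
  also have "\<dots> = (\<Sum>A\<in>LS. \<Sum>l\<in>P \<inter> A. h l A)"
    using assms by (simp add: sum.inter_restrict)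
  finally show ?thesis .
qed

lemma flow_val:
  fixes x :: "nat set \<Rightarrow> real" and r :: "nat \<Rightarrow> real" and g :: "nat \<Rightarrow> nat set \<Rightarrow> real"
  assumes r: "\<forall>l\<in>{1..L}. r l = (\<Sum>A\<in>{A\<in>link_sets L. l \<in> A}. x A * g l A)"
    and P: "P \<subseteq> {1..L}" and Q: "Q \<subseteq> {1..L}"
  shows "(\<Sum>l\<in>P. r l) - (\<Sum>k\<in>Q. r k) =
     (\<Sum>A\<in>link_sets L. x A * ((\<Sum>l\<in>P \<inter> A. g l A) - (\<Sum>l\<in>Q \<inter> A. g l A)))"
proof -
  have finLS: "finite (link_sets L)"
    by (rule finite_subset[of _ "Pow {1..L}"]) (auto simp: link_sets_def)
  have finP: "finite P" using P finite_subset by blast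
  have finQ: "finite Q" using Q finite_subset by blast
  have e: "(\<Sum>l\<in>R. r l) = (\<Sum>A\<in>link_sets L. x A * (\<Sum>l\<in>R \<inter> A. g l A))"
    if R: "R \<subseteq> {1..L}" "finite R" for R
  proof -
    have "(\<Sum>l\<in>R. r l) = (\<Sum>l\<in>R. \<Sum>A\<in>{A\<in>link_sets L. l \<in> A}. x A * g l A)"
      using r R by (intro sum.cong) auto
    also have "\<dots> = (\<Sum>A\<in>link_sets L. \<Sum>l\<in>R \<inter> A. x A * g l A)"
      by (rule swap_lemma[OF R(2) finLS])
    also have "\<dots> = (\<Sum>A\<in>link_sets L. x A * (\<Sum>l\<in>R \<inter> A. g l A))"
      by (simp add: sum_distrib_left)
    finally show ?thesis .
  qed
  show ?thesis using e[OF P finP] e[OF Q finQ]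
    by (simp add: sum_subtractf algebra_simps)
qed

theorem theorem1:
  fixes N L :: nat and Gw :: "nat set" and src dst :: "nat \<Rightarrow> nat"
    and S :: "nat \<Rightarrow> real" and n :: real and Intf :: "nat \<Rightarrow> nat \<Rightarrow> real"
    and alpha :: "nat \<Rightarrow> real"
  assumes "N \<ge> 1" and "L \<ge> 1"
    and "finite Gw" and "Gw \<noteq> {}" and "Gw \<inter> {1..N} = {}"
    and "\<forall>l\<in>{1..L}. src l \<in> Gw \<union> {1..N} \<and> dst l \<in> Gw \<union> {1..N}"
    and "\<forall>l\<in>{1..L}. S l > 0" and "n > 0"
    and "\<forall>k\<in>{1..L}. \<forall>l\<in>{1..L}. k \<noteq> l \<longrightarrow> Intf k l \<ge> 0"
    and "\<forall>i\<in>{1..N}. alpha i > 0"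
  shows "\<exists>x r dd d.
           lp_optimal L N (\<lambda>i. {l\<in>{1..L}. dst l = i}) (\<lambda>i. {l\<in>{1..L}. src l = i})
             S n Intf alpha x r dd d \<and>
           card {A\<in>link_sets L. x A \<noteq> 0} \<le> N"
proof -
  define Inc where "Inc = (\<lambda>i. {l\<in>{1..L}. dst l = i})"
  define Out where "Out = (\<lambda>i. {l\<in>{1..L}. src l = i})"
  define g where "g = gamma S n Intf"
  define c where "c i A = (\<Sum>l\<in>Inc i \<inter> A. g l A) - (\<Sum>l\<in>Out i \<inter> A. g l A)" for i A
  have finLS: "finite (link_sets L)"
    by (rule finite_subset[of _ "Pow {1..L}"]) (auto simp: link_sets_def)
  have neLS: "link_sets L \<noteq> {}"
  proof -
    have "{1} \<in> link_sets L" using assms(2) by (auto simp: link_sets_def)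
    then show ?thesis by auto
  qed
  interpret G: glp "link_sets L" "{1..N}" c alpha
    by unfold_locales (use finLS neLS assms(1) assms(10) in auto)
  have key: "(\<Sum>l\<in>Inc i. r l) - (\<Sum>k\<in>Out i. r k) = G.val i x"
    if "\<forall>l\<in>{1..L}. r l = (\<Sum>A\<in>{A\<in>link_sets L. l \<in> A}. x A * gamma S n Intf l A)" for r x i
  proof -
    have sub: "Inc i \<subseteq> {1..L}" "Out i \<subseteq> {1..L}" by (auto simp: Inc_def Out_def)
    show ?thesis using flow_val[OF that[folded g_def] sub]
      by (simp add: G.val_def c_def algebra_simps)
  qed
  obtain x d where v: "G.vertex x d" and opt: "\<forall>x' d'. G.feas x' d' \<longrightarrow> d' \<le> d"
    using G.opt_vertex by blast
  define r where "r l = (\<Sum>A\<in>{A\<in>link_sets L. l \<in> A}. x A * gamma S n Intf l A)" for l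
  define dd where "dd i = (\<Sum>l\<in>Inc i. r l) - (\<Sum>k\<in>Out i. r k)" for i
  have fx: "G.feas x d" using v unfolding G.vertex_def by blast
  have feas: "lp_feasible L N Inc Out S n Intf alpha x r dd d"
    using fx key[of r x] unfolding lp_feasible_def G.feas_def
    by (auto simp: r_def dd_def)
  have "lp_optimal L N Inc Out S n Intf alpha x r dd d"
    unfolding lp_optimal_def
  proof (intro conjI allI impI feas)
    fix x' r' dd' d' assume f': "lp_feasible L N Inc Out S n Intf alpha x' r' dd' d'"
    have "G.feas x' d'"
      using f' key[of r' x'] unfolding lp_feasible_def G.feas_def by auto
    then show "d' \<le> d" using opt by blast
  qed
  moreover have "card {A\<in>link_sets L. x A \<noteq> 0} \<le> N"
    using G.vertex_card[OF v] by (simp add: G.supp_def)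
  ultimately show ?thesis unfolding Inc_def Out_def by blast
qed

end
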